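(* Every T-stationary point $(\bar x,\bar y)$ of the relaxation (R), regarded as an MPOC, is degenerate, i.e. at least one of the nondegeneracy conditions ND1–ND4 fails at $(\bar x,\bar y)$.
   Context: Let $f\in C^2(\mathbb{R}^n,\mathbb{R})$ and $s\in\{0,1,\dots,n-1\}$. Relaxation (R): minimize $f(x)$ over $(x,y)\in\mathbb{R}^{2n}$ s.t. $\sum_{i=1}^n y_i\ge n-s$, $y_i\le 1$, $x_iy_i=0$, $y_i\ge0$, $i=1,\dots,n$. This is an MPOC (in variables $z=(x,y)$) with no equality constraints, inequality constraints $g_0(z)=\sum_i y_i-(n-s)\ge0$ and $g_i(z)=1-y_i\ge0$, and orthogonality type constraints $F_{1,i}(z)F_{2,i}(z)=0$, $F_{2,i}(z)\ge0$ with $F_{1,i}(z)=x_i$, $F_{2,i}(z)=y_i$, $i=1,\dots,n$. General MPOC definitions (for $\min f$ s.t. $h_i=0$, $g_j\ge0$, $F_{1,m}F_{2,m}=0$, $F_{2,m}\ge0$): at a feasible $\bar z$, $J_0=\{j\mid g_j(\bar z)=0\}$, $a_{00}=\{m\mid F_{1,m}(\bar z)=0=F_{2,m}(\bar z)\}$, $a_{01}=\{m\mid F_{1,m}(\bar z)=0,F_{2,m}(\bar z)>0\}$, $a_{10}=\{m\mid F_{1,m}(\bar z)\ne0,F_{2,m}(\bar z)=0\}$. LICQ: $Dh_i$, $Dg_j$ ($j\in J_0$), $DF_{1,m}$ ($m\in a_{01}\cup a_{00}$), $DF_{2,m}$ ($m\in a_{10}\cup a_{00}$) at $\bar z$ linearly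 independent. T-stationary: there exist multipliers $\bar\lambda_i,\bar\mu_j$ ($j\in J_0$), $\bar\sigma_{1,m}$ ($a_{01}$), $\bar\sigma_{2,m}$ ($a_{10}$), $\bar\varrho_{1,m},\bar\varrho_{2,m}$ ($a_{00}$) with $Df=\sum\bar\lambda_iDh_i+\sum_{J_0}\bar\mu_jDg_j+\sum_{a_{01}}\bar\sigma_{1,m}DF_{1,m}+\sum_{a_{10}}\bar\sigma_{2,m}DF_{2,m}+\sum_{a_{00}}(\bar\varrho_{1,m}DF_{1,m}+\bar\varrho_{2,m}DF_{2,m})$ at $\bar z$, $\bar\mu_j\ge0$, and $\bar\varrho_{1,m}=0$ or $\bar\varrho_{2,m}\le0$ for $m\in a_{00}$. Lagrangian $L=f-\sum\bar\lambda_ih_i-\sum_{J_0}\bar\mu_jg_j-\sum_{a_{01}}\bar\sigma_{1,m}F_{1,m}-\sum_{a_{10}}\bar\sigma_{2,m}F_{2,m}-\sum_{a_{00}}(\bar\varrho_{1,m}F_{1,m}+\bar\varrho_{2,m}F_{2,m})$; tangent space $T=\{\xi\mid Dh_i(\bar z)\xi=0,\ Dg_j(\bar z)\xi=0\ (j\in J_0),\ DF_{1,m}(\bar z)\xi=0\ (m\in a_{01}\cup a_{00}),\ DF_{2,m}(\bar z)\xi=0\ (m\in a_{10}\cup a_{00})\}$. Nondegeneracy of a T-stationary point: ND1 LICQ holds; ND2 $\bar\mu_j>0$ for all $j\in J_0$; ND3 $\bar\varrho_{1,m}\ne0$ and $\bar\varrho_{2,m}<0$ for all $m\in a_{00}$;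 ND4 $D^2L(\bar z)$ restricted to $T$ is nonsingular. A T-stationary point is degenerate if it is not nondegenerate. *)

theory Defs
  imports "HOL-Analysis.Analysis"
begin

text \<open>An MPOC: minimize fo(z) s.t. h_i(z) = 0 (i in I), g_j(z) >= 0 (j in J),
  F1_m(z) * F2_m(z) = 0, F2_m(z) >= 0 (m in M).  Derivatives are Frechet
  derivatives, i.e. linear functionals on the z-space.\<close>

abbreviation Dfun :: "('z::euclidean_space \<Rightarrow> real) \<Rightarrow> 'z \<Rightarrow> 'z \<Rightarrow> real" where
  "Dfun \<phi> z \<equiv> frechet_derivative \<phi> (at z)"

definition hess :: "('z::euclidean_space \<Rightarrow> real) \<Rightarrow> 'z \<Rightarrow> 'z \<Rightarrow> 'z \<Rightarrow> real" where
  "hess \<phi> z \<xi> \<eta> = frechet_derivative (\<lambda>w. frechet_derivative \<phi> (at w) \<eta>) (at z) \<xi>"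

definition C2 :: "('z::euclidean_space \<Rightarrow> real) \<Rightarrow> bool" where
  "C2 \<phi> \<longleftrightarrow> (\<exists>\<phi>' \<phi>''.
      (\<forall>x. (\<phi> has_derivative \<phi>' x) (at x)) \<and>
      (\<forall>x \<eta>. ((\<lambda>w. \<phi>' w \<eta>) has_derivative (\<lambda>\<xi>. \<phi>'' x \<xi> \<eta>)) (at x)) \<and>
      (\<forall>\<xi> \<eta>. continuous_on UNIV (\<lambda>x. \<phi>'' x \<xi> \<eta>)))"

definition mpoc_feasible ::
  "'i set \<Rightarrow> ('i \<Rightarrow> 'z \<Rightarrow> real) \<Rightarrow> 'j set \<Rightarrow> ('j \<Rightarrow> 'z \<Rightarrow> real) \<Rightarrow>
   'm set \<Rightarrow> ('m \<Rightarrow> 'z \<Rightarrow> real) \<Rightarrow> ('m \<Rightarrow> 'z \<Rightarrow> real) \<Rightarrow> 'z \<Rightarrow> bool" where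
  "mpoc_feasible I h J g M F1 F2 z \<longleftrightarrow>
     (\<forall>i\<in>I. h i z = 0) \<and> (\<forall>j\<in>J. g j z \<ge> 0) \<and>
     (\<forall>m\<in>M. F1 m z * F2 m z = 0 \<and> F2 m z \<ge> 0)"

definition J0 :: "'j set \<Rightarrow> ('j \<Rightarrow> 'z \<Rightarrow> real) \<Rightarrow> 'z \<Rightarrow> 'j set" where
  "J0 J g z = {j\<in>J. g j z = 0}"

definition a00 :: "'m set \<Rightarrow> ('m \<Rightarrow> 'z \<Rightarrow> real) \<Rightarrow> ('m \<Rightarrow> 'z \<Rightarrow> real) \<Rightarrow> 'z \<Rightarrow> 'm set" where
  "a00 M F1 F2 z = {m\<in>M. F1 m z = 0 \<and> F2 m z = 0}"

definition a01 :: "'m set \<Rightarrow> ('m \<Rightarrow> 'z \<Rightarrow> real) \<Rightarrow> ('m \<Rightarrow> 'z \<Rightarrow> real) \<Rightarrow> 'z \<Rightarrow> 'm set" where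
  "a01 M F1 F2 z = {m\<in>M. F1 m z = 0 \<and> F2 m z > 0}"

definition a10 :: "'m set \<Rightarrow> ('m \<Rightarrow> 'z \<Rightarrow> real) \<Rightarrow> ('m \<Rightarrow> 'z \<Rightarrow> real) \<Rightarrow> 'z \<Rightarrow> 'm set" where
  "a10 M F1 F2 z = {m\<in>M. F1 m z \<noteq> 0 \<and> F2 m z = 0}"

text \<open>LICQ: the family of active constraint gradients is linearly independent
  (written out: the only vanishing linear combination is the trivial one).\<close>
definition mpoc_LICQ ::
  "'i set \<Rightarrow> ('i \<Rightarrow> 'z::euclidean_space \<Rightarrow> real) \<Rightarrow> 'j set \<Rightarrow> ('j \<Rightarrow> 'z \<Rightarrow> real) \<Rightarrow>
   'm set \<Rightarrow> ('m \<Rightarrow> 'z \<Rightarrow> real) \<Rightarrow> ('m \<Rightarrow> 'z \<Rightarrow> real) \<Rightarrow> 'z \<Rightarrow> bool" where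
  "mpoc_LICQ I h J g M F1 F2 z \<longleftrightarrow>
     (\<forall>(lam::'i \<Rightarrow> real) (mu::'j \<Rightarrow> real) (c1::'m \<Rightarrow> real) (c2::'m \<Rightarrow> real).
        (\<forall>\<xi>. (\<Sum>i\<in>I. lam i * Dfun (h i) z \<xi>)
            + (\<Sum>j\<in>J0 J g z. mu j * Dfun (g j) z \<xi>)
            + (\<Sum>m\<in>a01 M F1 F2 z \<union> a00 M F1 F2 z. c1 m * Dfun (F1 m) z \<xi>)
            + (\<Sum>m\<in>a10 M F1 F2 z \<union> a00 M F1 F2 z. c2 m * Dfun (F2 m) z \<xi>) = 0)
        \<longrightarrow> (\<forall>i\<in>I. lam i = 0) \<and> (\<forall>j\<in>J0 J g z. mu j = 0)
           \<and> (\<forall>m\<in>a01 M F1 F2 z \<union> a00 M F1 F2 z. c1 m = 0)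
           \<and> (\<forall>m\<in>a10 M F1 F2 z \<union> a00 M F1 F2 z. c2 m = 0))"

definition mpoc_T_mult ::
  "('z::euclidean_space \<Rightarrow> real) \<Rightarrow> 'i set \<Rightarrow> ('i \<Rightarrow> 'z \<Rightarrow> real) \<Rightarrow> 'j set \<Rightarrow> ('j \<Rightarrow> 'z \<Rightarrow> real) \<Rightarrow>
   'm set \<Rightarrow> ('m \<Rightarrow> 'z \<Rightarrow> real) \<Rightarrow> ('m \<Rightarrow> 'z \<Rightarrow> real) \<Rightarrow> 'z \<Rightarrow>
   ('i \<Rightarrow> real) \<Rightarrow> ('j \<Rightarrow> real) \<Rightarrow> ('m \<Rightarrow> real) \<Rightarrow> ('m \<Rightarrow> real) \<Rightarrow>
   ('m \<Rightarrow> real) \<Rightarrow> ('m \<Rightarrow> real) \<Rightarrow> bool" where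
  "mpoc_T_mult fo I h J g M F1 F2 z lam mu s1 s2 r1 r2 \<longleftrightarrow>
     (\<forall>\<xi>. Dfun fo z \<xi> =
            (\<Sum>i\<in>I. lam i * Dfun (h i) z \<xi>)
          + (\<Sum>j\<in>J0 J g z. mu j * Dfun (g j) z \<xi>)
          + (\<Sum>m\<in>a01 M F1 F2 z. s1 m * Dfun (F1 m) z \<xi>)
          + (\<Sum>m\<in>a10 M F1 F2 z. s2 m * Dfun (F2 m) z \<xi>)
          + (\<Sum>m\<in>a00 M F1 F2 z. r1 m * Dfun (F1 m) z \<xi> + r2 m * Dfun (F2 m) z \<xi>)) \<and>
     (\<forall>j\<in>J0 J g z. mu j \<ge> 0) \<and>
     (\<forall>m\<in>a00 M F1 F2 z. r1 m = 0 \<or> r2 m \<le> 0)"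

definition mpoc_T_stationary ::
  "('z::euclidean_space \<Rightarrow> real) \<Rightarrow> 'i set \<Rightarrow> ('i \<Rightarrow> 'z \<Rightarrow> real) \<Rightarrow> 'j set \<Rightarrow> ('j \<Rightarrow> 'z \<Rightarrow> real) \<Rightarrow>
   'm set \<Rightarrow> ('m \<Rightarrow> 'z \<Rightarrow> real) \<Rightarrow> ('m \<Rightarrow> 'z \<Rightarrow> real) \<Rightarrow> 'z \<Rightarrow> bool" where
  "mpoc_T_stationary fo I h J g M F1 F2 z \<longleftrightarrow>
     mpoc_feasible I h J g M F1 F2 z \<and>
     (\<exists>lam mu s1 s2 r1 r2. mpoc_T_mult fo I h J g M F1 F2 z lam mu s1 s2 r1 r2)"

text \<open>Lagrangian, with index sets taken at the point zb.\<close>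
definition mpoc_lagrangian ::
  "('z::euclidean_space \<Rightarrow> real) \<Rightarrow> 'i set \<Rightarrow> ('i \<Rightarrow> 'z \<Rightarrow> real) \<Rightarrow> 'j set \<Rightarrow> ('j \<Rightarrow> 'z \<Rightarrow> real) \<Rightarrow>
   'm set \<Rightarrow> ('m \<Rightarrow> 'z \<Rightarrow> real) \<Rightarrow> ('m \<Rightarrow> 'z \<Rightarrow> real) \<Rightarrow> 'z \<Rightarrow>
   ('i \<Rightarrow> real) \<Rightarrow> ('j \<Rightarrow> real) \<Rightarrow> ('m \<Rightarrow> real) \<Rightarrow> ('m \<Rightarrow> real) \<Rightarrow>
   ('m \<Rightarrow> real) \<Rightarrow> ('m \<Rightarrow> real) \<Rightarrow> 'z \<Rightarrow> real" where
  "mpoc_lagrangian fo I h J g M F1 F2 zb lam mu s1 s2 r1 r2 = (\<lambda>z.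
      fo z - (\<Sum>i\<in>I. lam i * h i z)
           - (\<Sum>j\<in>J0 J g zb. mu j * g j z)
           - (\<Sum>m\<in>a01 M F1 F2 zb. s1 m * F1 m z)
           - (\<Sum>m\<in>a10 M F1 F2 zb. s2 m * F2 m z)
           - (\<Sum>m\<in>a00 M F1 F2 zb. r1 m * F1 m z + r2 m * F2 m z))"

definition mpoc_tangent ::
  "'i set \<Rightarrow> ('i \<Rightarrow> 'z::euclidean_space \<Rightarrow> real) \<Rightarrow> 'j set \<Rightarrow> ('j \<Rightarrow> 'z \<Rightarrow> real) \<Rightarrow>
   'm set \<Rightarrow> ('m \<Rightarrow> 'z \<Rightarrow> real) \<Rightarrow> ('m \<Rightarrow> 'z \<Rightarrow> real) \<Rightarrow> 'z \<Rightarrow> 'z set" where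
  "mpoc_tangent I h J g M F1 F2 z = {\<xi>.
     (\<forall>i\<in>I. Dfun (h i) z \<xi> = 0) \<and> (\<forall>j\<in>J0 J g z. Dfun (g j) z \<xi> = 0) \<and>
     (\<forall>m\<in>a01 M F1 F2 z \<union> a00 M F1 F2 z. Dfun (F1 m) z \<xi> = 0) \<and>
     (\<forall>m\<in>a10 M F1 F2 z \<union> a00 M F1 F2 z. Dfun (F2 m) z \<xi> = 0)}"

text \<open>Nondegenerate T-stationary point: ND1--ND4 hold (with the T-stationarity
  multipliers, which are unique under ND1).  ND4: the bilinear form D^2 L restricted
  to T is nonsingular.\<close>
definition mpoc_nondegenerate ::
  "('z::euclidean_space \<Rightarrow> real) \<Rightarrow> 'i set \<Rightarrow> ('i \<Rightarrow> 'z \<Rightarrow> real) \<Rightarrow> 'j set \<Rightarrow> ('j \<Rightarrow> 'z \<Rightarrow> real) \<Rightarrow>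
   'm set \<Rightarrow> ('m \<Rightarrow> 'z \<Rightarrow> real) \<Rightarrow> ('m \<Rightarrow> 'z \<Rightarrow> real) \<Rightarrow> 'z \<Rightarrow> bool" where
  "mpoc_nondegenerate fo I h J g M F1 F2 z \<longleftrightarrow>
     mpoc_feasible I h J g M F1 F2 z \<and>
     mpoc_LICQ I h J g M F1 F2 z \<and>
     (\<exists>lam mu s1 s2 r1 r2.
        mpoc_T_mult fo I h J g M F1 F2 z lam mu s1 s2 r1 r2 \<and>
        (\<forall>j\<in>J0 J g z. mu j > 0) \<and>
        (\<forall>m\<in>a00 M F1 F2 z. r1 m \<noteq> 0 \<and> r2 m < 0) \<and>
        (\<forall>\<xi>\<in>mpoc_tangent I h J g M F1 F2 z.
           (\<forall>\<eta>\<in>mpoc_tangent I h J g M F1 F2 z.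
              hess (mpoc_lagrangian fo I h J g M F1 F2 z lam mu s1 s2 r1 r2) z \<xi> \<eta> = 0)
           \<longrightarrow> \<xi> = 0))"

definition mpoc_degenerate ::
  "('z::euclidean_space \<Rightarrow> real) \<Rightarrow> 'i set \<Rightarrow> ('i \<Rightarrow> 'z \<Rightarrow> real) \<Rightarrow> 'j set \<Rightarrow> ('j \<Rightarrow> 'z \<Rightarrow> real) \<Rightarrow>
   'm set \<Rightarrow> ('m \<Rightarrow> 'z \<Rightarrow> real) \<Rightarrow> ('m \<Rightarrow> 'z \<Rightarrow> real) \<Rightarrow> 'z \<Rightarrow> bool" where
  "mpoc_degenerate fo I h J g M F1 F2 z \<longleftrightarrow>
     mpoc_T_stationary fo I h J g M F1 F2 z \<and> \<not> mpoc_nondegenerate fo I h J g M F1 F2 z"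

section \<open>The relaxation (R) as an MPOC in z = (x, y) :: real^'n \<times> real^'n, n = CARD('n)\<close>

definition R_I :: "nat set" where "R_I = {}"
definition R_h :: "nat \<Rightarrow> ((real^'n) \<times> (real^'n)) \<Rightarrow> real" where "R_h i z = 0"

text \<open>Inequality constraints: None is g_0, Some i is g_i.\<close>
definition R_J :: "'n option set" where "R_J = UNIV"
definition R_g :: "nat \<Rightarrow> 'n::finite option \<Rightarrow> ((real^'n) \<times> (real^'n)) \<Rightarrow> real" where
  "R_g s j z = (case j of
      None \<Rightarrow> (\<Sum>i\<in>UNIV. snd z $ i) - (real CARD('n) - real s)
    | Some i \<Rightarrow> 1 - snd z $ i)"

definition R_M :: "'n set" where "R_M = UNIV"
definition R_F1 :: "'n \<Rightarrow> ((real^'n) \<times> (real^'n)) \<Rightarrow> real" where "R_F1 i z = fst z $ i"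
definition R_F2 :: "'n \<Rightarrow> ((real^'n) \<times> (real^'n)) \<Rightarrow> real" where "R_F2 i z = snd z $ i"

definition R_obj :: "(real^'n \<Rightarrow> real) \<Rightarrow> ((real^'n) \<times> (real^'n)) \<Rightarrow> real" where
  "R_obj f z = f (fst z)"

end

theory Submission imports Defs begin

lemma lin_hasD: fixes l :: "'z::euclidean_space \<Rightarrow> real"
  assumes "linear l" shows "((\<lambda>z. l z + c) has_derivative l) (at z)"
proof -
  have "bounded_linear l" using assms linear_conv_bounded_linear by blast
  then have "(l has_derivative l) (at z)" by (rule bounded_linear_imp_has_derivative)
  then show ?thesis by (rule has_derivative_add_const)
qed

lemma hasD_F1: "(R_F1 i has_derivative (\<lambda>\<xi>. fst \<xi> $ i)) (at z)"
proof -
  have "linear (\<lambda>\<xi>::(real^'a)\<times>(real^'a). fst \<xi> $ i)" by (auto intro!: linearI)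
  from lin_hasD[OF this, of 0 z] show ?thesis by (simp add: R_F1_def[abs_def])
qed

lemma hasD_F2: "(R_F2 i has_derivative (\<lambda>\<xi>. snd \<xi> $ i)) (at z)"
proof -
  have "linear (\<lambda>\<xi>::(real^'a)\<times>(real^'a). snd \<xi> $ i)" by (auto intro!: linearI)
  from lin_hasD[OF this, of 0 z] show ?thesis by (simp add: R_F2_def[abs_def])
qed

definition Lg :: "'n::finite option \<Rightarrow> ((real^'n) \<times> (real^'n)) \<Rightarrow> real" where
  "Lg j \<xi> = (case j of None \<Rightarrow> (\<Sum>i\<in>UNIV. snd \<xi> $ i) | Some i \<Rightarrow> - snd \<xi> $ i)"

lemma hasD_g: "(R_g s j has_derivative Lg j) (at z)"
proof (cases j)
  case None
  have lin: "linear (\<lambda>\<xi>::(real^'a)\<times>(real^'a). (\<Sum>i\<in>UNIV. snd \<xi> $ i))"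
    by (auto intro!: linearI simp: sum.distrib sum_distrib_left)
  have eq: "R_g s j = (\<lambda>z. (\<Sum>i\<in>UNIV. snd z $ i) + (real s - real CARD('a)))"
    by (rule ext) (simp add: R_g_def None)
  show ?thesis unfolding eq using lin_hasD[OF lin, of "real s - real CARD('a)" z] None
    by (simp add: Lg_def[abs_def])
next
  case (Some k)
  have "linear (\<lambda>\<xi>::(real^'a)\<times>(real^'a). - snd \<xi> $ k)"
    by (auto intro!: linearI)
  from lin_hasD[OF this, of 1 z] show ?thesis
    using Some by (simp add: R_g_def[abs_def] Lg_def[abs_def] add.commute)
qed

lemma hasD_h: "(R_h i has_derivative (\<lambda>_. 0)) (at z)"
  by (simp add: R_h_def[abs_def])

lemma hasD_obj: assumes "\<forall>x. (f has_derivative f' x) (at x)"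
  shows "(R_obj f has_derivative (\<lambda>\<xi>. f' (fst z) (fst \<xi>))) (at z)"
proof -
  have "((\<lambda>w. f (fst w)) has_derivative (\<lambda>\<xi>. f' (fst z) (fst \<xi>))) (at z)"
    by (rule has_derivative_compose[OF has_derivative_fst[OF has_derivative_ident]]) (use assms in auto)
  then show ?thesis by (simp add: R_obj_def[abs_def])
qed

lemma hasD_L: assumes "\<forall>x. (f has_derivative f' x) (at x)"
  shows "(mpoc_lagrangian (R_obj f) R_I R_h R_J (R_g s) R_M R_F1 R_F2 zb lam mu s1 s2 r1 r2
     has_derivative (\<lambda>\<eta>. f' (fst w) (fst \<eta>) - (\<Sum>i\<in>R_I. lam i * 0)
           - (\<Sum>j\<in>J0 R_J (R_g s) zb. mu j * Lg j \<eta>)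
           - (\<Sum>m\<in>a01 R_M R_F1 R_F2 zb. s1 m * fst \<eta> $ m)
           - (\<Sum>m\<in>a10 R_M R_F1 R_F2 zb. s2 m * snd \<eta> $ m)
           - (\<Sum>m\<in>a00 R_M R_F1 R_F2 zb. r1 m * fst \<eta> $ m + r2 m * snd \<eta> $ m))) (at w)"
  unfolding mpoc_lagrangian_def
  by (intro has_derivative_diff has_derivative_sum has_derivative_add has_derivative_mult_right
        hasD_obj[OF assms] hasD_h hasD_g hasD_F1 hasD_F2)

lemma hess_L:
  assumes d1: "\<forall>x. (f has_derivative f' x) (at x)"
    and d2: "\<forall>x \<eta>. ((\<lambda>w. f' w \<eta>) has_derivative (\<lambda>\<xi>. f'' x \<xi> \<eta>)) (at x)"
  shows "hess (mpoc_lagrangian (R_obj f) R_I R_h R_J (R_g s) R_M R_F1 R_F2 zb lam mu s1 s2 r1 r2) z \<xi> \<eta>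
     = f'' (fst z) (fst \<xi>) (fst \<eta>)"
proof -
  define K where "K = (\<Sum>i\<in>R_I. lam i * 0)
           + (\<Sum>j\<in>J0 R_J (R_g s) zb. mu j * Lg j \<eta>)
           + (\<Sum>m\<in>a01 R_M R_F1 R_F2 zb. s1 m * fst \<eta> $ m)
           + (\<Sum>m\<in>a10 R_M R_F1 R_F2 zb. s2 m * snd \<eta> $ m)
           + (\<Sum>m\<in>a00 R_M R_F1 R_F2 zb. r1 m * fst \<eta> $ m + r2 m * snd \<eta> $ m)"
  have fd: "frechet_derivative (mpoc_lagrangian (R_obj f) R_I R_h R_J (R_g s) R_M R_F1 R_F2 zb lam mu s1 s2 r1 r2) (at w) \<eta>
      = f' (fst w) (fst \<eta>) - K" for w
    unfolding frechet_derivative_at[OF hasD_L[OF d1, of s zb lam mu s1 s2 r1 r2 w], symmetric]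
    by (simp add: K_def algebra_simps)
  have "((\<lambda>w. f' (fst w) (fst \<eta>) - K) has_derivative (\<lambda>\<xi>. f'' (fst z) (fst \<xi>) (fst \<eta>) - 0)) (at z)"
  proof (rule has_derivative_diff[OF _ has_derivative_const])
    show "((\<lambda>w. f' (fst w) (fst \<eta>)) has_derivative (\<lambda>\<xi>. f'' (fst z) (fst \<xi>) (fst \<eta>))) (at z)"
      by (rule has_derivative_compose[OF has_derivative_fst[OF has_derivative_ident], where g="\<lambda>w. f' w (fst \<eta>)"])
        (use d2 in auto)
  qed
  then have "frechet_derivative (\<lambda>w. f' (fst w) (fst \<eta>) - K) (at z) = (\<lambda>\<xi>. f'' (fst z) (fst \<xi>) (fst \<eta>) - 0)"
    by (rule frechet_derivative_at[symmetric])
  then show ?thesis unfolding hess_def fd by simp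
qed

theorem mainTheorem13:
  fixes f :: "real^'n \<Rightarrow> real" and s :: nat and xb yb :: "real^'n"
  assumes "C2 f"
    and "s < CARD('n)"
    and "mpoc_T_stationary (R_obj f) R_I R_h R_J (R_g s) R_M R_F1 R_F2 (xb, yb)"
  shows "mpoc_degenerate (R_obj f) R_I R_h R_J (R_g s) R_M R_F1 R_F2 (xb, yb)"
proof -
  obtain f' f'' where d1: "\<forall>x. (f has_derivative f' x) (at x)"
    and d2: "\<forall>x \<eta>. ((\<lambda>w. f' w \<eta>) has_derivative (\<lambda>\<xi>. f'' x \<xi> \<eta>)) (at x)"
    using assms(1) unfolding C2_def by blast
  have DF1: "Dfun (R_F1 i) w = (\<lambda>\<xi>. fst \<xi> $ i)" for i and w :: "(real^'n)\<times>(real^'n)"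
    by (rule frechet_derivative_at[OF hasD_F1, symmetric])
  have DF2: "Dfun (R_F2 i) w = (\<lambda>\<xi>. snd \<xi> $ i)" for i and w :: "(real^'n)\<times>(real^'n)"
    by (rule frechet_derivative_at[OF hasD_F2, symmetric])
  have Dg: "Dfun (R_g s k) w = Lg k" for k and w :: "(real^'n)\<times>(real^'n)"
    by (rule frechet_derivative_at[OF hasD_g, symmetric])
  have Dobj: "Dfun (R_obj f) w = (\<lambda>\<xi>. f' (fst w) (fst \<xi>))" for w :: "(real^'n)\<times>(real^'n)"
    by (rule frechet_derivative_at[OF hasD_obj[OF d1], symmetric])
  have f'0: "f' x 0 = 0" for x
    using has_derivative_linear[of f "f' x"] d1 linear_0 by blast
  have f''0: "f'' x 0 \<eta> = 0" for x \<eta>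
    using has_derivative_linear d2 linear_0 by blast
  let ?J0 = "J0 R_J (R_g s) (xb, yb)"
  let ?a01 = "a01 R_M R_F1 R_F2 (xb, yb)"
  let ?a10 = "a10 R_M R_F1 R_F2 (xb, yb)"
  let ?a00 = "a00 R_M R_F1 R_F2 (xb, yb)"
  have J0N: "None \<in> ?J0 \<longleftrightarrow> (\<Sum>i\<in>UNIV. yb $ i) = real CARD('n) - real s"
    by (simp add: J0_def R_J_def R_g_def)
  have J0S: "Some j \<in> ?J0 \<longleftrightarrow> yb $ j = 1" for j
    by (auto simp: J0_def R_J_def R_g_def)
  have A01: "j \<in> ?a01 \<longleftrightarrow> xb $ j = 0 \<and> yb $ j > 0" for j
    by (simp add: a01_def R_M_def R_F1_def R_F2_def)
  have A10: "j \<in> ?a10 \<longleftrightarrow> xb $ j \<noteq> 0 \<and> yb $ j = 0" for j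
    by (simp add: a10_def R_M_def R_F1_def R_F2_def)
  have A00: "j \<in> ?a00 \<longleftrightarrow> xb $ j = 0 \<and> yb $ j = 0" for j
    by (simp add: a00_def R_M_def R_F1_def R_F2_def)
  have feas: "mpoc_feasible R_I R_h R_J (R_g s) R_M R_F1 R_F2 (xb, yb)"
    using assms(3) unfolding mpoc_T_stationary_def by blast
  have y01: "0 \<le> yb $ j \<and> yb $ j \<le> 1" for j
    using feas unfolding mpoc_feasible_def
    by (auto simp: R_J_def R_M_def R_g_def R_F2_def dest!: spec[of _ "Some j"] bspec[of _ _ j])
  have xy0: "xb $ j * yb $ j = 0" for j
    using feas unfolding mpoc_feasible_def by (auto simp: R_M_def R_F1_def R_F2_def)
  have sumge: "(\<Sum>i\<in>UNIV. yb $ i) \<ge> real CARD('n) - real s"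
    using feas unfolding mpoc_feasible_def by (auto simp: R_J_def R_g_def dest!: spec[of _ None])
  have finJ: "finite ?J0" by simp
  have "\<not> mpoc_nondegenerate (R_obj f) R_I R_h R_J (R_g s) R_M R_F1 R_F2 (xb, yb)"
  proof
    assume nd: "mpoc_nondegenerate (R_obj f) R_I R_h R_J (R_g s) R_M R_F1 R_F2 (xb, yb)"
    have licq: "mpoc_LICQ R_I R_h R_J (R_g s) R_M R_F1 R_F2 (xb, yb)"
      using nd unfolding mpoc_nondegenerate_def by blast
    obtain lam mu s1 s2 r1 r2 where
      tm: "mpoc_T_mult (R_obj f) R_I R_h R_J (R_g s) R_M R_F1 R_F2 (xb, yb) lam mu s1 s2 r1 r2"
      and mupos: "\<forall>j\<in>?J0. mu j > 0"
      and nd4: "\<forall>\<xi>\<in>mpoc_tangent R_I R_h R_J (R_g s) R_M R_F1 R_F2 (xb, yb).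
           (\<forall>\<eta>\<in>mpoc_tangent R_I R_h R_J (R_g s) R_M R_F1 R_F2 (xb, yb).
              hess (mpoc_lagrangian (R_obj f) R_I R_h R_J (R_g s) R_M R_F1 R_F2 (xb, yb) lam mu s1 s2 r1 r2) (xb, yb) \<xi> \<eta> = 0)
           \<longrightarrow> \<xi> = 0"
      using nd unfolding mpoc_nondegenerate_def by blast
    have st: "\<And>\<xi>. f' xb (fst \<xi>) =
            (\<Sum>i\<in>R_I. lam i * Dfun (R_h i) (xb, yb) \<xi>)
          + (\<Sum>k\<in>?J0. mu k * Lg k \<xi>)
          + (\<Sum>m\<in>?a01. s1 m * fst \<xi> $ m)
          + (\<Sum>m\<in>?a10. s2 m * snd \<xi> $ m)
          + (\<Sum>m\<in>?a00. r1 m * fst \<xi> $ m + r2 m * snd \<xi> $ m)"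
      using tm unfolding mpoc_T_mult_def by (simp add: DF1 DF2 Dg Dobj del: split_paired_All)
    define e :: "nat \<Rightarrow> 'n \<Rightarrow> (real^'n)\<times>(real^'n)" where "e = (\<lambda>_ j. (0, \<chi> i. if i = j then 1 else 0))"
    have key: "0 = (if None \<in> ?J0 then mu None else 0) - (if Some j \<in> ?J0 then mu (Some j) else 0)"
      if "xb $ j = 0" "yb $ j > 0" for j
    proof -
      let ?\<xi> = "e 0 j"
      have s1: "(\<Sum>k\<in>?J0. mu k * Lg k ?\<xi>) = (\<Sum>k\<in>?J0. (if k = None then mu None else 0) - (if k = Some j then mu (Some j) else 0))"
      proof (rule sum.cong)
        fix k show "mu k * Lg k ?\<xi> = (if k = None then mu None else 0) - (if k = Some j then mu (Some j) else 0)"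
          by (cases k) (auto simp: Lg_def e_def)
      qed simp
      have s2: "(\<Sum>m\<in>?a10. s2 m * snd ?\<xi> $ m) = 0"
        by (rule sum.neutral) (use that in \<open>auto simp: A10 e_def\<close>)
      have s3: "(\<Sum>m\<in>?a00. r1 m * fst ?\<xi> $ m + r2 m * snd ?\<xi> $ m) = 0"
        by (rule sum.neutral) (use that in \<open>auto simp: A00 e_def\<close>)
      have s4: "(\<Sum>m\<in>?a01. s1 m * fst ?\<xi> $ m) = 0"
        by (rule sum.neutral) (auto simp: e_def)
      from st[of ?\<xi>] show ?thesis
        using s1 s2 s3 s4 finJ by (simp add: f'0 R_I_def e_def sum_subtractf)
    qed
    show False
    proof (cases "\<exists>j. 0 < yb $ j \<and> yb $ j < 1")
      case True
      then obtain j where j: "0 < yb $ j" "yb $ j < 1" by blast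
      have xj: "xb $ j = 0" using xy0[of j] j by simp
      show False
      proof (cases "None \<in> ?J0")
        case True
        have "Some j \<notin> ?J0" using J0S j by simp
        with key[OF xj j(1)] True mupos show False by force
      next
        case False
        let ?\<xi> = "e 0 j"
        have T: "?\<xi> \<in> mpoc_tangent R_I R_h R_J (R_g s) R_M R_F1 R_F2 (xb, yb)"
          unfolding mpoc_tangent_def
        proof (simp add: DF1 DF2 Dg R_I_def, intro conjI ballI)
          fix k assume k: "k \<in> ?J0"
          then obtain i where i: "k = Some i" using False by (cases k) auto
          with k J0S j have "i \<noteq> j" by auto
          then show "Lg k ?\<xi> = 0" using i by (simp add: Lg_def e_def)
        next
          fix m assume "m \<in> ?a01 \<union> ?a00" then show "fst ?\<xi> $ m = 0" by (simp add: e_def)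
        next
          fix m assume "m \<in> ?a10 \<union> ?a00" then show "snd ?\<xi> $ m = 0"
            using j by (auto simp: e_def A10 A00)
        qed
        have "\<forall>\<eta>\<in>mpoc_tangent R_I R_h R_J (R_g s) R_M R_F1 R_F2 (xb, yb).
              hess (mpoc_lagrangian (R_obj f) R_I R_h R_J (R_g s) R_M R_F1 R_F2 (xb, yb) lam mu s1 s2 r1 r2) (xb, yb) ?\<xi> \<eta> = 0"
          by (simp add: hess_L[OF d1 d2] f''0 e_def)
        with nd4 T have "?\<xi> = 0" by blast
        then have "snd ?\<xi> $ j = 0" by simp
        then show False by (simp add: e_def)
      qed
    next
      case False
      then have y01': "yb $ j = 0 \<or> yb $ j = 1" for j using y01[of j] by (metis less_eq_real_def)
      show False
      proof (cases "None \<in> ?J0")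
        case True
        define mu' :: "'n option \<Rightarrow> real" where "mu' = (\<lambda>_. 1)"
        have Jeq: "?J0 = insert None (Some ` {i. yb $ i = 1})"
          using True J0S by (auto, case_tac x, auto)
        have Aeq: "?a10 \<union> ?a00 = {m. yb $ m = 0}" by (auto simp: A10 A00)
        have H: "(\<Sum>i\<in>R_I. (0::real) * Dfun (R_h i) (xb, yb) \<xi>)
            + (\<Sum>j\<in>?J0. mu' j * Dfun (R_g s j) (xb, yb) \<xi>)
            + (\<Sum>m\<in>?a01 \<union> ?a00. 0 * Dfun (R_F1 m) (xb, yb) \<xi>)
            + (\<Sum>m\<in>?a10 \<union> ?a00. (-1) * Dfun (R_F2 m) (xb, yb) \<xi>) = 0" for \<xi>
        proof -
          have U: "(UNIV::'n set) = {i. yb $ i = 1} \<union> {m. yb $ m = 0}" using y01' by auto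
          have "(\<Sum>i\<in>UNIV. snd \<xi> $ i) = (\<Sum>i\<in>{i. yb $ i = 1}. snd \<xi> $ i) + (\<Sum>i\<in>{m. yb $ m = 0}. snd \<xi> $ i)"
            by (subst U, rule sum.union_disjoint) auto
          moreover have "(\<Sum>j\<in>?J0. mu' j * Lg j \<xi>) = (\<Sum>i\<in>UNIV. snd \<xi> $ i) - (\<Sum>i\<in>{i. yb $ i = 1}. snd \<xi> $ i)"
            unfolding Jeq by (simp add: sum.reindex mu'_def Lg_def sum_negf)
          ultimately show ?thesis by (simp add: Dg DF1 DF2 R_I_def Aeq sum_negf)
        qed
        have "\<forall>j\<in>?J0. mu' j = 0" using licq unfolding mpoc_LICQ_def
          apply -
          apply (drule spec[of _ "\<lambda>_. 0"], drule spec[of _ mu'], drule spec[of _ "\<lambda>_. 0"], drule spec[of _ "\<lambda>_. -1"])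
          apply (erule impE)
           apply (use H in simp)
          apply (elim conjE)
          apply assumption
          done
        with True show False by (simp add: mu'_def)
      next
        case False
        show False
        proof (cases "\<exists>j. yb $ j = 1")
          case True
          then obtain j where j: "yb $ j = 1" by blast
          have xj: "xb $ j = 0" using xy0[of j] j by simp
          have "Some j \<in> ?J0" using J0S j by simp
          with key[OF xj] j False mupos show False by force
        next
          case False
          then have "yb $ j = 0" for j using y01' by blast
          then have "(\<Sum>i\<in>UNIV. yb $ i) = 0" by simp
          with sumge assms(2) show False by linarith
        qed
      qed
    qed
  qed
  then show ?thesis using assms(3) unfolding mpoc_degenerate_def by blast
qed

end
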